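(* Let $\mathcal{F}=(A,R)$ and $\mathcal{G}=(A,R')$ be argumentation frameworks with $R\subseteq R'$ and $\mathrm{conf}(\mathcal{F})=\mathrm{conf}(\mathcal{G})$, and let $S\in\mathit{tfcf2}(\mathcal{F})$. Then $S\in\mathit{tfcf2}(\mathcal{G})$. In particular, $\mathit{tfcf2}$ is both $\preceq^E_\cap$-skepticism adequate and $\preceq^E_W$-skepticism adequate.
   Context: An argumentation framework (AF) is $\mathcal{F}=(A_{\mathcal{F}},R_{\mathcal{F}})$ with $R_{\mathcal{F}}\subseteq A_{\mathcal{F}}\times A_{\mathcal{F}}$ (possibly infinite); $a\rightarrow b$ means $(a,b)\in R_{\mathcal{F}}$. $\mathrm{conf}(\mathcal{F})=\{(x,y):(x,y)\in R_{\mathcal{F}}\text{ or }(y,x)\in R_{\mathcal{F}}\}$. $\tau_1\preceq^E_\cap\tau_2$ iff $\bigcap_{S_1\in\tau_1}S_1\subseteq\bigcap_{S_2\in\tau_2}S_2$; $\tau_1\preceq^E_W\tau_2$ iff for every $S_2\in\tau_2$ there is $S_1\in\tau_1$ with $S_1\subseteq S_2$. A semantics $\sigma$ is $\preceq$-skepticism adequate if for any AFs $\mathcal{F},\mathcal{G}$ on the same argument set with $R_{\mathcal{F}}\supseteq R_{\mathcal{G}}$ and $\mathrm{conf}(\mathcal{F})=\mathrm{conf}(\mathcal{G})$, $\sigma(\mathcal{F})\preceq\sigma(\mathcal{G})$. $\mathcal{F}|_B=(A_{\mathcal{F}}\cap B,R_{\mathcal{F}}\cap(B\times B))$. Conflict-free: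 no $a,b\in S$ with $a\rightarrow b$; naive: $\subseteq$-maximal conflict-free. $\mathrm{SCC}(a)$: set of $b$ with directed attack paths (possibly of length 0) from $a$ to $b$ and back. $D_S(X)=\{b\in X:\exists a\in S\setminus X,\ a\rightarrow b\}$. $C^0_S(a)=\mathrm{SCC}(a)$; $C^{\alpha+1}_S(a)$ = component of $a$ in $\mathcal{F}|_{C^\alpha_S(a)\setminus D_S(C^\alpha_S(a))}$ (empty if $a$ not there); for limit $\lambda$, component of $a$ in $\mathcal{F}|_{\bigcap_{\alpha<\lambda}C^\alpha_S(a)}$; $\alpha_S(a)$ = least $\alpha$ with $a\notin C^\alpha_S(a)$ or $C^{\alpha+1}_S(a)=C^\alpha_S(a)$. $S\in\mathit{tfcf2}(\mathcal{F})$ iff $S$ is conflict-free and for each $a\in A_{\mathcal{F}}$, $a\notin C^{\alpha_S(a)}_S(a)$ or $S\cap C^{\alpha_S(a)}_S(a)$ is a naive extension of $\mathcal{F}|_{C^{\alpha_S(a)}_S(a)}$. *)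

theory Defs
  imports Main
begin

text \<open>An argumentation framework is a pair (A, R) of a (possibly infinite) set of
arguments and an attack relation; well-formedness R \<subseteq> A \<times> A is
assumed explicitly where needed.\<close>

type_synonym 'a af = "'a set \<times> ('a \<times> 'a) set"

definition conf :: "'a af \<Rightarrow> ('a \<times> 'a) set" where
  "conf F = {(x, y). (x, y) \<in> snd F \<or> (y, x) \<in> snd F}"

definition restr :: "'a af \<Rightarrow> 'a set \<Rightarrow> 'a af" where
  "restr F B = (fst F \<inter> B, snd F \<inter> (B \<times> B))"

definition conflict_free :: "'a af \<Rightarrow> 'a set \<Rightarrow> bool" where
  "conflict_free F S \<longleftrightarrow> S \<subseteq> fst F \<and> (\<forall>a\<in>S. \<forall>b\<in>S. (a, b) \<notin> snd F)"

definition naive :: "'a af \<Rightarrow> 'a set \<Rightarrow> bool" where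
  "naive F S \<longleftrightarrow> conflict_free F S \<and> (\<forall>T. conflict_free F T \<and> S \<subseteq> T \<longrightarrow> T = S)"

definition comp :: "'a af \<Rightarrow> 'a \<Rightarrow> 'a set" where
  "comp F a = (if a \<in> fst F then {b. (a, b) \<in> (snd F)\<^sup>* \<and> (b, a) \<in> (snd F)\<^sup>*} else {})"

definition SCC :: "'a af \<Rightarrow> 'a \<Rightarrow> 'a set" where
  "SCC F a = comp F a"

definition D :: "'a af \<Rightarrow> 'a set \<Rightarrow> 'a set \<Rightarrow> 'a set" where
  "D F S X = {b \<in> X. \<exists>a \<in> S - X. (a, b) \<in> snd F}"

definition C_step :: "'a af \<Rightarrow> 'a set \<Rightarrow> 'a \<Rightarrow> 'a set \<Rightarrow> 'a set" where
  "C_step F S a X = comp (restr F (X - D F S X)) a"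

text \<open>The transfinite sequence C^alpha_S(a), alpha an ordinal, represented by the
set of its values (its stages): C^0 = SCC(a); successor steps; and at limits the
component of a in F restricted to the intersection of a (nonempty) chain of
earlier stages.\<close>
inductive_set C_stages :: "'a af \<Rightarrow> 'a set \<Rightarrow> 'a \<Rightarrow> 'a set set"
  for F :: "'a af" and S :: "'a set" and a :: 'a where
  zero: "SCC F a \<in> C_stages F S a"
| succ: "X \<in> C_stages F S a \<Longrightarrow> C_step F S a X \<in> C_stages F S a"
| lim: "(\<And>X. X \<in> M \<Longrightarrow> X \<in> C_stages F S a) \<Longrightarrow> M \<noteq> {} \<Longrightarrow> (\<forall>X\<in>M. \<forall>Y\<in>M. X \<subseteq> Y \<or> Y \<subseteq> X)
        \<Longrightarrow> comp (restr F (\<Inter>M)) a \<in> C_stages F S a"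

text \<open>C^{alpha_S(a)}_S(a): the stage at which a has dropped out or the sequence has
become stationary (all such stages coincide).\<close>
definition C_final :: "'a af \<Rightarrow> 'a set \<Rightarrow> 'a \<Rightarrow> 'a set" where
  "C_final F S a = (THE X. X \<in> C_stages F S a \<and> (a \<notin> X \<or> C_step F S a X = X))"

definition tfcf2 :: "'a af \<Rightarrow> 'a set set" where
  "tfcf2 F = {S. conflict_free F S \<and>
     (\<forall>a \<in> fst F. a \<notin> C_final F S a \<or>
        naive (restr F (C_final F S a)) (S \<inter> C_final F S a))}"

definition skept_cap :: "'a set set \<Rightarrow> 'a set set \<Rightarrow> bool" where
  "skept_cap T1 T2 \<longleftrightarrow> \<Inter>T1 \<subseteq> \<Inter>T2"

definition skept_W :: "'a set set \<Rightarrow> 'a set set \<Rightarrow> bool" where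
  "skept_W T1 T2 \<longleftrightarrow> (\<forall>S2\<in>T2. \<exists>S1\<in>T1. S1 \<subseteq> S2)"

definition skepticism_adequate ::
  "('a af \<Rightarrow> 'a set set) \<Rightarrow> ('a set set \<Rightarrow> 'a set set \<Rightarrow> bool) \<Rightarrow> bool" where
  "skepticism_adequate \<sigma> le \<longleftrightarrow>
     (\<forall>A RF RG. RF \<subseteq> A \<times> A \<and> RG \<subseteq> A \<times> A \<and> RG \<subseteq> RF \<and> conf (A, RF) = conf (A, RG)
        \<longrightarrow> le (\<sigma> (A, RF)) (\<sigma> (A, RG)))"

end

theory Submission
  imports Defs
begin

lemma comp_empty_or: "comp F x = {} \<or> x \<in> comp F x"
  by (auto simp: comp_def)

lemma comp_restr_sub: "comp (restr F Y) x \<subseteq> Y"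
proof
  fix y assume "y \<in> comp (restr F Y) x"
  then have x: "x \<in> Y" and p: "(x, y) \<in> (snd F \<inter> Y \<times> Y)\<^sup>*"
    by (auto simp: comp_def restr_def split: if_splits)
  from p show "y \<in> Y"
    by (cases rule: rtranclE) (use x in auto)
qed

lemma comp_mono:
  assumes a: "fst F \<subseteq> fst F'" "snd F \<subseteq> snd F'"
  shows "comp F x \<subseteq> comp F' x"
proof
  fix y assume y: "y \<in> comp F x"
  have m: "(snd F)\<^sup>* \<subseteq> (snd F')\<^sup>*" using a(2) by (rule rtrancl_mono)
  show "y \<in> comp F' x" using y a(1) m by (auto simp: comp_def split: if_splits)
qed

lemma restr_restr: "Z \<subseteq> Y \<Longrightarrow> restr (restr F Y) Z = restr F Z"
  by (auto simp: restr_def)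

lemma path_lemma:
  assumes "(u, v) \<in> r\<^sup>*" "(x, u) \<in> r\<^sup>*" "(v, x) \<in> r\<^sup>*"
  shows "(u, v) \<in> (r \<inter> {z. (x, z) \<in> r\<^sup>* \<and> (z, x) \<in> r\<^sup>*} \<times> {z. (x, z) \<in> r\<^sup>* \<and> (z, x) \<in> r\<^sup>*})\<^sup>*"
  using assms
proof (induction rule: rtrancl_induct)
  case base
  then show ?case by simp
next
  case (step y z)
  have yx: "(y, x) \<in> r\<^sup>*" using step by (meson converse_rtrancl_into_rtrancl)
  have IH: "(u, y) \<in> (r \<inter> {z. (x, z) \<in> r\<^sup>* \<and> (z, x) \<in> r\<^sup>*} \<times> {z. (x, z) \<in> r\<^sup>* \<and> (z, x) \<in> r\<^sup>*})\<^sup>*"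
    using step yx by blast
  have xy: "(x, y) \<in> r\<^sup>*" using step by (meson rtrancl_trans)
  have xz: "(x, z) \<in> r\<^sup>*" using xy step by (meson rtrancl.rtrancl_into_rtrancl)
  show ?case
    apply (rule rtrancl.rtrancl_into_rtrancl[OF IH])
    using step xy yx xz by blast
qed

lemma comp_idem: "comp (restr F (comp F x)) x = comp F x"
proof (cases "x \<in> fst F")
  case False
  then show ?thesis by (simp add: comp_def restr_def)
next
  case True
  let ?X = "comp F x"
  have X: "?X = {z. (x, z) \<in> (snd F)\<^sup>* \<and> (z, x) \<in> (snd F)\<^sup>*}"
    using True by (simp add: comp_def)
  have "x \<in> ?X" using X by simp
  have "?X \<subseteq> comp (restr F ?X) x"
  proof
    fix y assume y: "y \<in> ?X"
    then have a: "(x, y) \<in> (snd F)\<^sup>*" "(y, x) \<in> (snd F)\<^sup>*" using X by auto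
    have "(x, y) \<in> (snd F \<inter> ?X \<times> ?X)\<^sup>*"
      using path_lemma[OF a(1) rtrancl.rtrancl_refl a(2)] X by simp
    moreover have "(y, x) \<in> (snd F \<inter> ?X \<times> ?X)\<^sup>*"
      using path_lemma[OF a(2) a(1) rtrancl.rtrancl_refl] X by simp
    moreover have "x \<in> fst (restr F ?X)" using True \<open>x \<in> ?X\<close> by (simp add: restr_def)
    moreover have "snd (restr F ?X) = snd F \<inter> ?X \<times> ?X" by (simp add: restr_def)
    ultimately show "y \<in> comp (restr F ?X) x"
      unfolding comp_def[of "restr F ?X" x] by (simp only: if_True mem_Collect_eq)
  qed
  then show ?thesis using comp_restr_sub[of F "comp F x" x] by (rule subset_antisym[rotated])
qed

lemma comp_restr_idem: "comp (restr F (comp (restr F Y) x)) x = comp (restr F Y) x"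
  using comp_idem[of "restr F Y" x] restr_restr[OF comp_restr_sub[of F Y x]] by simp

lemma comp_restr_mono: "Y \<subseteq> Z \<Longrightarrow> comp (restr F Y) x \<subseteq> comp (restr F Z) x"
  by (rule comp_mono) (auto simp: restr_def)

lemma C_step_sub: "C_step F S x X \<subseteq> X"
  unfolding C_step_def using comp_restr_sub[of F "X - D F S X" x] by blast

lemma C_step_mono: "X \<subseteq> Y \<Longrightarrow> C_step F S x X \<subseteq> C_step F S x Y"
  unfolding C_step_def
  by (rule comp_restr_mono) (auto simp: D_def)

lemma fix_closed: "C_step F S x X = X \<Longrightarrow> comp (restr F X) x = X"
  unfolding C_step_def
  by (metis comp_restr_idem)

lemma fix_below:
  assumes fx: "C_step F S x X = X" and "Y \<in> C_stages F S x"
  shows "X \<subseteq> Y"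
  using assms(2)
proof (induction rule: C_stages.induct)
  case zero
  have "X \<subseteq> comp F x"
    using fx unfolding C_step_def by (metis comp_mono inf_le1 restr_def fst_conv snd_conv)
  then show ?case by (simp add: SCC_def)
next
  case (succ Y)
  then show ?case using C_step_mono[OF succ.IH, of F S x] fx by simp
next
  case (lim M)
  then have "X \<subseteq> \<Inter>M" by blast
  then have "comp (restr F X) x \<subseteq> comp (restr F (\<Inter>M)) x" by (rule comp_restr_mono)
  then show ?case by (simp only: fix_closed[OF fx])
qed

lemma comp_notin: "x \<notin> comp F x \<Longrightarrow> comp F x = {}"
  using comp_empty_or[of F x] by blast

lemma stage_empty: "Y \<in> C_stages F S x \<Longrightarrow> x \<notin> Y \<Longrightarrow> Y = {}"
  by (induction rule: C_stages.induct) (simp_all add: SCC_def C_step_def comp_notin)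

lemma exists_fix_stage: "\<exists>L \<in> C_stages F S x. C_step F S x L = L"
proof -
  from subset.Hausdorff[of "C_stages F S x"] obtain M where mc: "subset.maxchain (C_stages F S x) M" ..
  then have ch: "M \<subseteq> C_stages F S x" "\<forall>X\<in>M. \<forall>Y\<in>M. X \<subseteq> Y \<or> Y \<subseteq> X"
    and mx: "\<not> (\<exists>N. subset.chain (C_stages F S x) N \<and> M \<subset> N)"
    by (auto simp: subset.maxchain_def subset.chain_def)
  have "M \<noteq> {}"
  proof
    assume "M = {}"
    have "subset.chain (C_stages F S x) {SCC F x}"
      by (auto simp: subset.chain_def intro: C_stages.zero)
    with mx \<open>M = {}\<close> show False by blast
  qed
  define L where "L = comp (restr F (\<Inter>M)) x"
  have L: "L \<in> C_stages F S x" unfolding L_def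
    by (rule C_stages.lim) (use ch \<open>M \<noteq> {}\<close> in auto)
  have Ls: "L \<subseteq> \<Inter>M" unfolding L_def by (rule comp_restr_sub)
  have cs: "C_step F S x L \<in> C_stages F S x" using L by (rule C_stages.succ)
  have sub: "C_step F S x L \<subseteq> L" by (rule C_step_sub)
  have "C_step F S x L \<in> M"
  proof (rule ccontr)
    assume "C_step F S x L \<notin> M"
    have "subset.chain (C_stages F S x) (insert (C_step F S x L) M)"
      using ch cs sub Ls by (auto simp: subset.chain_def)
    moreover have "M \<subset> insert (C_step F S x L) M" using \<open>C_step F S x L \<notin> M\<close> by auto
    ultimately show False using mx by blast
  qed
  then have "\<Inter>M \<subseteq> C_step F S x L" by (rule Inter_lower)
  then have "L \<subseteq> C_step F S x L" using Ls by (rule order_trans[rotated])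
  then have "C_step F S x L = L" using sub by (rule subset_antisym[rotated])
  then show ?thesis using L by (rule bexI[where x=L and P="\<lambda>L. C_step F S x L = L"])
qed

lemma C_final_props:
  "C_step F S x (C_final F S x) = C_final F S x \<and> (\<forall>X. C_step F S x X = X \<longrightarrow> X \<subseteq> C_final F S x)"
proof -
  obtain L where L: "L \<in> C_stages F S x" "C_step F S x L = L" using exists_fix_stage[of F S x] by (elim bexE)
  have emp: "C_step F S x {} = {}" using C_step_sub[of F S x "{}"] by blast
  have "C_final F S x = L"
    unfolding C_final_def
  proof (rule the_equality)
    show "L \<in> C_stages F S x \<and> (x \<notin> L \<or> C_step F S x L = L)" using L by simp
  next
    fix X assume X: "X \<in> C_stages F S x \<and> (x \<notin> X \<or> C_step F S x X = X)"
    have fX: "C_step F S x X = X"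
    proof (cases "x \<in> X")
      case True then show ?thesis using X by simp
    next
      case False then have "X = {}" using stage_empty[of X F S x] X by simp
      then show ?thesis using emp by simp
    qed
    have "X \<subseteq> L" using fX L(1) by (rule fix_below)
    moreover have "L \<subseteq> X" using L(2) conjunct1[OF X] by (rule fix_below)
    ultimately show "X = L" by (rule subset_antisym)
  qed
  moreover have "\<forall>X. C_step F S x X = X \<longrightarrow> X \<subseteq> L"
    using fix_below[OF _ L(1)] by simp
  ultimately show ?thesis using L(2) by simp
qed

lemma fix_iff: "C_step F S x X = X \<longleftrightarrow> D F S X = {} \<and> comp (restr F X) x = X"
proof
  assume a: "C_step F S x X = X"
  then have "X \<subseteq> X - D F S X" using comp_restr_sub unfolding C_step_def by metis
  then have "D F S X = {}" by (auto simp: D_def)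
  then show "D F S X = {} \<and> comp (restr F X) x = X" using fix_closed[OF a] by simp
next
  assume "D F S X = {} \<and> comp (restr F X) x = X"
  then show "C_step F S x X = X" by (simp add: C_step_def)
qed

lemma comp_restr_iff:
  assumes "x \<in> fst F" "x \<in> X"
  shows "comp (restr F X) x = X \<longleftrightarrow>
    (\<forall>y\<in>X. (x, y) \<in> (snd F \<inter> X \<times> X)\<^sup>* \<and> (y, x) \<in> (snd F \<inter> X \<times> X)\<^sup>*)"
proof -
  have "comp (restr F X) x = {y. (x, y) \<in> (snd F \<inter> X \<times> X)\<^sup>* \<and> (y, x) \<in> (snd F \<inter> X \<times> X)\<^sup>*}"
    using assms by (simp add: comp_def restr_def)
  moreover have "comp (restr F X) x \<subseteq> X" by (rule comp_restr_sub)
  ultimately show ?thesis by blast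
qed

lemma comp_fst: "y \<in> comp F x \<Longrightarrow> x \<in> fst F"
  by (simp add: comp_def split: if_splits)

lemma final_facts:
  assumes "x \<in> C_final F S x"
  shows "D F S (C_final F S x) = {}"
    and "\<forall>y\<in>C_final F S x. (x, y) \<in> (snd F \<inter> C_final F S x \<times> C_final F S x)\<^sup>* \<and>
                              (y, x) \<in> (snd F \<inter> C_final F S x \<times> C_final F S x)\<^sup>*"
    and "x \<in> fst F"
proof -
  have f: "C_step F S x (C_final F S x) = C_final F S x" using C_final_props[of F S x] by blast
  then have c: "comp (restr F (C_final F S x)) x = C_final F S x"
    and d: "D F S (C_final F S x) = {}" using fix_iff[of F S x "C_final F S x"] by blast+
  show "D F S (C_final F S x) = {}" by (rule d)
  have xa: "x \<in> fst F" using assms c comp_fst[of x "restr F (C_final F S x)" x]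
    by (simp add: restr_def)
  then show "x \<in> fst F" .
  show "\<forall>y\<in>C_final F S x. (x, y) \<in> (snd F \<inter> C_final F S x \<times> C_final F S x)\<^sup>* \<and>
                              (y, x) \<in> (snd F \<inter> C_final F S x \<times> C_final F S x)\<^sup>*"
    using comp_restr_iff[OF xa assms] c by blast
qed

lemma fix_intro:
  assumes "x \<in> fst F" "x \<in> X" "D F S X = {}"
    "\<forall>y\<in>X. (x, y) \<in> (snd F \<inter> X \<times> X)\<^sup>* \<and> (y, x) \<in> (snd F \<inter> X \<times> X)\<^sup>*"
  shows "X \<subseteq> C_final F S x"
proof -
  have "comp (restr F X) x = X" using comp_restr_iff[OF assms(1,2)] assms(4) by blast
  then have "C_step F S x X = X" using fix_iff[of F S x X] assms(3) by blast
  then show ?thesis using C_final_props[of F S x] by blast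
qed

lemma W_sub_Y:
  assumes RR: "R \<subseteq> R'" and cf: "\<And>u v. (u, v) \<in> R' \<Longrightarrow> (u, v) \<in> R \<or> (v, u) \<in> R"
    and cfS: "conflict_free (A, R) S"
    and aY: "a \<in> C_final (A, R') S a" and bY: "b \<in> C_final (A, R') S a"
    and bW: "b \<in> C_final (A, R) S b"
  shows "C_final (A, R) S b \<subseteq> C_final (A, R') S a"
proof -
  define Y where "Y = C_final (A, R') S a"
  define W where "W = C_final (A, R) S b"
  have dY: "D (A, R') S Y = {}" and pY: "\<forall>y\<in>Y. (a, y) \<in> (R' \<inter> Y \<times> Y)\<^sup>* \<and> (y, a) \<in> (R' \<inter> Y \<times> Y)\<^sup>*"
    and aA: "a \<in> A"
    using final_facts[OF aY] unfolding Y_def by auto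
  have dW: "D (A, R) S W = {}" and pW: "\<forall>y\<in>W. (b, y) \<in> (R \<inter> W \<times> W)\<^sup>* \<and> (y, b) \<in> (R \<inter> W \<times> W)\<^sup>*"
    using final_facts[OF bW] unfolding W_def by auto
  have bY': "b \<in> Y" "a \<in> Y" using bY aY Y_def by auto
  have bW': "b \<in> W" using bW W_def by simp
  define X where "X = Y \<union> W \<union> {s \<in> S - W. \<exists>w\<in>W. (s, w) \<in> R'}"
  let ?Q = "R' \<inter> X \<times> X"
  have mY: "(R' \<inter> Y \<times> Y)\<^sup>* \<subseteq> ?Q\<^sup>*" by (rule rtrancl_mono) (auto simp: X_def)
  have mW: "(R \<inter> W \<times> W)\<^sup>* \<subseteq> ?Q\<^sup>*" by (rule rtrancl_mono) (use RR in \<open>auto simp: X_def\<close>)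
  have ab: "(a, b) \<in> ?Q\<^sup>*" "(b, a) \<in> ?Q\<^sup>*" using pY bY' mY by blast+
  have nW: "\<And>s w. s \<in> S \<Longrightarrow> s \<notin> W \<Longrightarrow> w \<in> W \<Longrightarrow> (s, w) \<notin> R"
    using dW by (auto simp: D_def)
  have paths: "(a, y) \<in> ?Q\<^sup>* \<and> (y, a) \<in> ?Q\<^sup>*" if y: "y \<in> X" for y
  proof -
    consider "y \<in> Y" | "y \<in> W" | "y \<in> S" "y \<notin> W" "\<exists>w\<in>W. (y, w) \<in> R'"
      using y X_def by blast
    then show ?thesis
    proof cases
      case 1 then show ?thesis using pY mY by blast
    next
      case 2
      then have "(b, y) \<in> ?Q\<^sup>*" "(y, b) \<in> ?Q\<^sup>*" using pW mW by blast+
      then show ?thesis using ab by (meson rtrancl_trans)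
    next
      case 3
      then obtain w where w: "w \<in> W" "(y, w) \<in> R'" by blast
      have "(y, w) \<notin> R" using nW 3 w by blast
      then have "(w, y) \<in> R" using cf w by blast
      then have e1: "(w, y) \<in> ?Q" "(y, w) \<in> ?Q" using RR w y X_def by auto
      have "(b, w) \<in> ?Q\<^sup>*" "(w, b) \<in> ?Q\<^sup>*" using pW mW w by blast+
      then have "(a, w) \<in> ?Q\<^sup>*" "(w, a) \<in> ?Q\<^sup>*" using ab by (meson rtrancl_trans)+
      then show ?thesis using e1 by (meson rtrancl_into_rtrancl converse_rtrancl_into_rtrancl)
    qed
  qed
  have dX: "D (A, R') S X = {}"
  proof (rule ccontr)
    assume "D (A, R') S X \<noteq> {}"
    then obtain z s where z: "z \<in> X" "s \<in> S" "s \<notin> X" "(s, z) \<in> R'" by (auto simp: D_def)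
    consider "z \<in> Y" | "z \<in> W" | "z \<in> S" using z X_def by blast
    then show False
    proof cases
      case 1 then show ?thesis using dY z X_def by (auto simp: D_def)
    next
      case 2 then show ?thesis using z X_def by auto
    next
      case 3 then show ?thesis using cf[OF z(4)] z(2) cfS unfolding conflict_free_def by auto
    qed
  qed
  have "X \<subseteq> C_final (A, R') S a"
    by (rule fix_intro) (use aA bY' dX paths in \<open>auto simp: X_def\<close>)
  then show ?thesis unfolding W_def[symmetric] Y_def[symmetric] X_def by blast
qed

lemma main:
  assumes RR: "R \<subseteq> R'" and cnf: "conf (A, R) = conf (A, R')"
    and St: "S \<in> tfcf2 (A, R)"
  shows "S \<in> tfcf2 (A, R')"
proof -
  have cf: "\<And>u v. (u, v) \<in> R' \<Longrightarrow> (u, v) \<in> R \<or> (v, u) \<in> R"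
  proof -
    fix u v assume "(u, v) \<in> R'"
    then have "(u, v) \<in> conf (A, R')" by (simp add: conf_def)
    then have "(u, v) \<in> conf (A, R)" using cnf by simp
    then show "(u, v) \<in> R \<or> (v, u) \<in> R" by (simp add: conf_def)
  qed
  have cfS: "conflict_free (A, R) S" and
    nv: "\<And>x. x \<in> A \<Longrightarrow> x \<in> C_final (A, R) S x \<Longrightarrow>
            naive (restr (A, R) (C_final (A, R) S x)) (S \<inter> C_final (A, R) S x)"
    using St by (auto simp: tfcf2_def)
  have cfS': "conflict_free (A, R') S" using cfS cf unfolding conflict_free_def fst_conv snd_conv by blast
  have "naive (restr (A, R') (C_final (A, R') S a)) (S \<inter> C_final (A, R') S a)"
    if aA: "a \<in> A" and aY: "a \<in> C_final (A, R') S a" for a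
  proof -
    define Y where "Y = C_final (A, R') S a"
    have dY: "D (A, R') S Y = {}" using final_facts(1)[OF aY] unfolding Y_def .
    have "conflict_free (restr (A, R') Y) (S \<inter> Y)"
      using cfS' unfolding conflict_free_def restr_def fst_conv snd_conv by blast
    moreover have "T = S \<inter> Y" if T: "conflict_free (restr (A, R') Y) T" "S \<inter> Y \<subseteq> T" for T
    proof (rule ccontr)
      assume "T \<noteq> S \<inter> Y"
      have TY: "T \<subseteq> A \<inter> Y" and Tc: "\<forall>u\<in>T. \<forall>v\<in>T. (u, v) \<notin> R' \<inter> Y \<times> Y"
        using T(1) unfolding conflict_free_def restr_def fst_conv snd_conv by blast+
      obtain b where b: "b \<in> T" "b \<notin> S" using T(2) TY \<open>T \<noteq> S \<inter> Y\<close> by blast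
      have bA: "b \<in> A" "b \<in> Y" using TY b by auto
      show False
      proof (cases "\<exists>s\<in>S. (s, b) \<in> R")
        case True
        then obtain s where s: "s \<in> S" "(s, b) \<in> R" by blast
        have sR': "(s, b) \<in> R'" using s RR by blast
        have "s \<in> Y"
        proof (rule ccontr)
          assume "s \<notin> Y"
          then have "b \<in> D (A, R') S Y" using s sR' bA by (auto simp: D_def)
          then show False using dY by simp
        qed
        then show False using Tc T(2) s sR' b bA by blast
      next
        case False
        define W where "W = C_final (A, R) S b"
        have "C_step (A, R) S b {b} = {b}"
        proof (rule iffD2[OF fix_iff], rule conjI)
          show "D (A, R) S {b} = {}" using False by (auto simp: D_def)
          show "comp (restr (A, R) {b}) b = {b}"
            using comp_restr_iff[of b "restr (A, R) {b}" "{b}"] comp_restr_iff[of b "(A, R)" "{b}"] bA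
            by simp
        qed
        then have bW: "b \<in> W" using C_final_props[of "(A, R)" S b] W_def by blast
        have WY: "W \<subseteq> Y" unfolding W_def Y_def
          by (rule W_sub_Y[OF RR cf cfS aY]) (use bA bW Y_def W_def in auto)
        have nW: "naive (restr (A, R) W) (S \<inter> W)" using nv[OF bA(1)] bW W_def by simp
        have sub: "insert b (S \<inter> W) \<subseteq> T" using T(2) WY b(1) by blast
        have p1: "insert b (S \<inter> W) \<subseteq> A \<inter> W" using sub TY bW by blast
        have p2: "\<forall>u\<in>insert b (S \<inter> W). \<forall>v\<in>insert b (S \<inter> W). (u, v) \<notin> R \<inter> W \<times> W"
        proof (intro ballI)
          fix u v assume u: "u \<in> insert b (S \<inter> W)" and v: "v \<in> insert b (S \<inter> W)"
          show "(u, v) \<notin> R \<inter> W \<times> W"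
          proof
            assume "(u, v) \<in> R \<inter> W \<times> W"
            then have "(u, v) \<in> R' \<inter> Y \<times> Y" using RR WY by blast
            moreover have "u \<in> T" "v \<in> T" using u v sub by blast+
            ultimately show False using Tc by blast
          qed
        qed
        have "conflict_free (restr (A, R) W) (insert b (S \<inter> W))"
          unfolding conflict_free_def restr_def fst_conv snd_conv using p1 p2 by blast
        then have "insert b (S \<inter> W) = S \<inter> W" using nW unfolding naive_def by blast
        then show False using b by blast
      qed
    qed
    ultimately show ?thesis unfolding naive_def Y_def by blast
  qed
  then show ?thesis using cfS' by (auto simp: tfcf2_def)
qed

theorem theorem15:
  fixes A :: "'a set" and R R' :: "('a \<times> 'a) set" and S :: "'a set"
  assumes "R \<subseteq> A \<times> A" and "R' \<subseteq> A \<times> A"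
    and "R \<subseteq> R'" and "conf (A, R) = conf (A, R')"
    and "S \<in> tfcf2 (A, R)"
  shows "S \<in> tfcf2 (A, R') \<and>
    skepticism_adequate (tfcf2 :: 'a af \<Rightarrow> 'a set set) skept_cap \<and>
    skepticism_adequate (tfcf2 :: 'a af \<Rightarrow> 'a set set) skept_W"
proof (intro conjI)
  show "S \<in> tfcf2 (A, R')" using main assms by blast
  have sub: "tfcf2 (B, RG) \<subseteq> tfcf2 (B, RF)"
    if "RG \<subseteq> RF" "conf (B, RF) = conf (B, RG)" for B :: "'a set" and RF RG
    using main[of RG RF B] that by auto
  show "skepticism_adequate (tfcf2 :: 'a af \<Rightarrow> 'a set set) skept_cap"
    unfolding skepticism_adequate_def skept_cap_def
  proof (intro allI impI)
    fix B :: "'a set" and RF RG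
    assume h: "RF \<subseteq> B \<times> B \<and> RG \<subseteq> B \<times> B \<and> RG \<subseteq> RF \<and> conf (B, RF) = conf (B, RG)"
    then have "tfcf2 (B, RG) \<subseteq> tfcf2 (B, RF)" using sub by blast
    then show "\<Inter> (tfcf2 (B, RF)) \<subseteq> \<Inter> (tfcf2 (B, RG))" by blast
  qed
  show "skepticism_adequate (tfcf2 :: 'a af \<Rightarrow> 'a set set) skept_W"
    unfolding skepticism_adequate_def skept_W_def
  proof (intro allI impI)
    fix B :: "'a set" and RF RG
    assume h: "RF \<subseteq> B \<times> B \<and> RG \<subseteq> B \<times> B \<and> RG \<subseteq> RF \<and> conf (B, RF) = conf (B, RG)"
    then have "tfcf2 (B, RG) \<subseteq> tfcf2 (B, RF)" using sub by blast
    then show "\<forall>S2\<in>tfcf2 (B, RG). \<exists>S1\<in>tfcf2 (B, RF). S1 \<subseteq> S2" by blast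
  qed
qed

end
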